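(* An instance $(G,\ell)$ of \textsc{Geometric Thickness} with $n=|V(G)|$ and $m=|E(G)|$ can be expressed as a sentence of the existential theory of the reals in $2n+m$ variables, using polynomials of total degree at most $6$ and $O(n^4)$ polynomial (in)equalities, such that the sentence is true if and only if $(G,\ell)$ is a yes-instance.
   Context: A straight-line drawing maps vertices to distinct points of $\mathbb{R}^2$, edges being straight segments; a geometric $\ell$-layer drawing of $G$ is a straight-line drawing with an edge coloring $\chi:E(G)\to[\ell]$ such that no two same-colored edges cross. \textsc{Geometric Thickness}: given $(G,\ell)$, decide whether $G$ admits a geometric $\ell$-layer drawing. A sentence of the existential theory of the reals has the form $\exists x_1,\dots,x_N\in\mathbb{R}:\varphi$, where $\varphi$ is a quantifier-free Boolean combination of atoms $p\ \sigma\ q$ with $p,q$ real polynomials in $x_1,\dots,x_N$ with integer coefficients and $\sigma\in\{<,\le,=,\ge,>\}$. *)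

theory Defs
  imports "HOL-Analysis.Analysis"
begin

text \<open>A polynomial with integer coefficients in the variables x_0, x_1, ... is given
  as a list of monomials (c, vs): coefficient c times the product of the variables
  whose indices are listed in vs (with repetition).\<close>

type_synonym mpoly = "(int \<times> nat list) list"

definition mpoly_eval :: "(nat \<Rightarrow> real) \<Rightarrow> mpoly \<Rightarrow> real" where
  "mpoly_eval x p = (\<Sum>m\<leftarrow>p. of_int (fst m) * (\<Prod>i\<leftarrow>snd m. x i))"

definition mpoly_degree :: "mpoly \<Rightarrow> nat" where
  "mpoly_degree p = Max (insert 0 (set (map (\<lambda>m. length (snd m)) p)))"

definition mpoly_vars :: "mpoly \<Rightarrow> nat set" where
  "mpoly_vars p = (\<Union>m\<in>set p. set (snd m))"

datatype rel = RLt | RLe | REq | RGe | RGt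

fun rel_holds :: "rel \<Rightarrow> real \<Rightarrow> real \<Rightarrow> bool" where
  "rel_holds RLt a b = (a < b)"
| "rel_holds RLe a b = (a \<le> b)"
| "rel_holds REq a b = (a = b)"
| "rel_holds RGe a b = (a \<ge> b)"
| "rel_holds RGt a b = (a > b)"

datatype etr_fm = Atom mpoly rel mpoly | FNot etr_fm | FAnd etr_fm etr_fm | FOr etr_fm etr_fm

fun fm_holds :: "(nat \<Rightarrow> real) \<Rightarrow> etr_fm \<Rightarrow> bool" where
  "fm_holds x (Atom p r q) = rel_holds r (mpoly_eval x p) (mpoly_eval x q)"
| "fm_holds x (FNot a) = (\<not> fm_holds x a)"
| "fm_holds x (FAnd a b) = (fm_holds x a \<and> fm_holds x b)"
| "fm_holds x (FOr a b) = (fm_holds x a \<or> fm_holds x b)"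

fun fm_vars :: "etr_fm \<Rightarrow> nat set" where
  "fm_vars (Atom p r q) = mpoly_vars p \<union> mpoly_vars q"
| "fm_vars (FNot a) = fm_vars a"
| "fm_vars (FAnd a b) = fm_vars a \<union> fm_vars b"
| "fm_vars (FOr a b) = fm_vars a \<union> fm_vars b"

fun fm_degree :: "etr_fm \<Rightarrow> nat" where
  "fm_degree (Atom p r q) = max (mpoly_degree p) (mpoly_degree q)"
| "fm_degree (FNot a) = fm_degree a"
| "fm_degree (FAnd a b) = max (fm_degree a) (fm_degree b)"
| "fm_degree (FOr a b) = max (fm_degree a) (fm_degree b)"

fun fm_atoms :: "etr_fm \<Rightarrow> nat" where
  "fm_atoms (Atom p r q) = 1"
| "fm_atoms (FNot a) = fm_atoms a"
| "fm_atoms (FAnd a b) = fm_atoms a + fm_atoms b"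
| "fm_atoms (FOr a b) = fm_atoms a + fm_atoms b"

definition etr_true :: "etr_fm \<Rightarrow> bool" where
  "etr_true \<phi> = (\<exists>x. fm_holds x \<phi>)"

definition simple_graph :: "nat \<Rightarrow> nat set set \<Rightarrow> bool" where
  "simple_graph n E = (\<forall>e\<in>E. \<exists>u v. e = {u, v} \<and> u \<noteq> v \<and> u < n \<and> v < n)"

type_synonym point = "real \<times> real"

definition straight_line_drawing :: "nat \<Rightarrow> (nat \<Rightarrow> point) \<Rightarrow> bool" where
  "straight_line_drawing n p = inj_on p {..<n}"

definition edge_seg :: "(nat \<Rightarrow> point) \<Rightarrow> nat set \<Rightarrow> point set" where
  "edge_seg p e = convex hull (p ` e)"

definition crosses :: "(nat \<Rightarrow> point) \<Rightarrow> nat set \<Rightarrow> nat set \<Rightarrow> bool" where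
  "crosses p e f = (e \<noteq> f \<and> (\<exists>z. z \<in> edge_seg p e \<and> z \<in> edge_seg p f \<and> z \<notin> p ` (e \<inter> f)))"

definition geometric_layer_drawing ::
  "nat \<Rightarrow> nat set set \<Rightarrow> nat \<Rightarrow> (nat \<Rightarrow> point) \<Rightarrow> (nat set \<Rightarrow> nat) \<Rightarrow> bool" where
  "geometric_layer_drawing n E l p col =
     (straight_line_drawing n p \<and> (\<forall>e\<in>E. col e \<in> {1..l}) \<and>
      (\<forall>e\<in>E. \<forall>f\<in>E. col e = col f \<longrightarrow> \<not> crosses p e f))"

definition geometric_thickness_yes :: "nat \<Rightarrow> nat set set \<Rightarrow> nat \<Rightarrow> bool" where
  "geometric_thickness_yes n E l = (\<exists>p col. geometric_layer_drawing n E l p col)"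

end

theory Submission
  imports Defs
begin

lemma segc: "(x1,x2) \<in> closed_segment (a1,a2) (b1,b2) \<longleftrightarrow>
  (\<exists>u. 0\<le>u \<and> u\<le>1 \<and> x1 = (1-u)*a1+u*b1 \<and> x2 = (1-u)*a2+u*(b2::real))"
  by (simp add: in_segment)

definition ori :: "real \<Rightarrow> real \<Rightarrow> real \<Rightarrow> real \<Rightarrow> real \<Rightarrow> real \<Rightarrow> real" where
  "ori a1 a2 b1 b2 c1 c2 = (b1-a1)*(c2-a2) - (b2-a2)*(c1-a1)"

definition onseg :: "real \<Rightarrow> real \<Rightarrow> real \<Rightarrow> real \<Rightarrow> real \<Rightarrow> real \<Rightarrow> bool" where
  "onseg p1 p2 a1 a2 b1 b2 = (ori a1 a2 b1 b2 p1 p2 = 0 \<and> (p1-a1)*(p1-b1)+(p2-a2)*(p2-b2) \<le> 0)"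

lemma sumsq_pos: "(u1::real,u2) \<noteq> (0,0) \<Longrightarrow> u1^2+u2^2 > 0"
  by (simp add: sum_power2_gt_zero_iff)

lemma para:
  fixes u1 u2 w1 w2 :: real
  assumes "u1*w2 - u2*w1 = 0" "(u1,u2) \<noteq> (0,0)"
  shows "w1 = ((w1*u1+w2*u2)/(u1^2+u2^2)) * u1 \<and> w2 = ((w1*u1+w2*u2)/(u1^2+u2^2)) * u2"
proof -
  have N: "u1^2+u2^2 > 0" using sumsq_pos[OF assms(2)] .
  have "w1*(u1^2+u2^2) - (w1*u1+w2*u2)*u1 = -u2*(u1*w2 - u2*w1)" by (simp add: power2_eq_square algebra_simps)
  then have "w1*(u1^2+u2^2) = (w1*u1+w2*u2)*u1" using assms(1) by simp
  moreover have "w2*(u1^2+u2^2) - (w1*u1+w2*u2)*u2 = u1*(u1*w2 - u2*w1)" by (simp add: power2_eq_square algebra_simps)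
  then have "w2*(u1^2+u2^2) = (w1*u1+w2*u2)*u2" using assms(1) by simp
  ultimately have "w1 = (w1*u1+w2*u2)*u1/(u1^2+u2^2)" "w2 = (w1*u1+w2*u2)*u2/(u1^2+u2^2)"
    using N by (simp_all add: eq_divide_eq del: sum_power2_eq_zero_iff)
  then show ?thesis by simp
qed


lemma on_iff: "(p1,p2) \<in> closed_segment (a1,a2) (b1,b2) \<longleftrightarrow> onseg p1 p2 a1 a2 b1 b2"
proof
  assume "(p1,p2) \<in> closed_segment (a1,a2) (b1,b2)"
  then obtain u where u: "0\<le>u" "u\<le>1" "p1 = (1-u)*a1+u*b1" "p2 = (1-u)*a2+u*b2" by (auto simp: segc)
  have "ori a1 a2 b1 b2 p1 p2 = 0" unfolding ori_def u by (simp add: algebra_simps)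
  moreover have "(p1-a1)*(p1-b1)+(p2-a2)*(p2-b2) = (u*(u-1)) * ((b1-a1)^2+(b2-a2)^2)"
    unfolding u by (simp add: algebra_simps power2_eq_square)
  moreover have "u*(u-1) \<le> 0" using u by (simp add: mult_nonneg_nonpos)
  ultimately show "onseg p1 p2 a1 a2 b1 b2" unfolding onseg_def
    by (simp add: mult_nonpos_nonneg)
next
  assume h: "onseg p1 p2 a1 a2 b1 b2"
  show "(p1,p2) \<in> closed_segment (a1,a2) (b1,b2)"
  proof (cases "(b1-a1,b2-a2) = (0,0)")
    case True
    then have "(p1-a1)^2+(p2-a2)^2 \<le> 0" using h unfolding onseg_def by (simp add: power2_eq_square)
    then have "p1-a1 = 0 \<and> p2-a2 = 0" by (simp only: sum_power2_le_zero_iff)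
    then have "p1 = a1" "p2 = a2" by auto
    then show ?thesis by (auto simp: segc intro!: exI[of _ 0])
  next
    case False
    define t where "t = ((p1-a1)*(b1-a1)+(p2-a2)*(b2-a2))/((b1-a1)^2+(b2-a2)^2)"
    have N: "(b1-a1)^2+(b2-a2)^2 > 0" using sumsq_pos[OF False] .
    have "(b1-a1)*(p2-a2) - (b2-a2)*(p1-a1) = 0" using h unfolding onseg_def ori_def by simp
    from para[OF this False] have e: "p1 - a1 = t*(b1-a1)" "p2-a2 = t*(b2-a2)" unfolding t_def by auto
    have "(p1-a1)*(p1-b1)+(p2-a2)*(p2-b2) = (t*(t-1)) * ((b1-a1)^2+(b2-a2)^2)"
    proof -
      have q: "p1 = a1 + t*(b1-a1)" "p2 = a2 + t*(b2-a2)" using e by (simp_all add: algebra_simps)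
      show ?thesis by (simp add: q algebra_simps power2_eq_square)
    qed
    with h N have "t*(t-1) * ((b1-a1)^2+(b2-a2)^2) \<le> 0" unfolding onseg_def by simp
    with N have "t*(t-1) \<le> 0" by (simp add: mult_le_0_iff)
    then have "0 \<le> t" "t \<le> 1" by (auto simp: mult_le_0_iff)
    then show ?thesis using e unfolding segc by (intro exI[of _ t]) (auto simp: algebra_simps)
  qed
qed

lemma oned:
  fixes s t c d :: real
  assumes "0\<le>s" "s\<le>1" "0\<le>t" "t\<le>1" "t = (1-s)*c + s*d"
  shows "(0\<le>c\<and>c\<le>1) \<or> (0\<le>d\<and>d\<le>1) \<or> (c\<noteq>d \<and> 0 \<le> c/(c-d) \<and> c/(c-d) \<le> 1)"
proof (rule ccontr)
  assume n: "\<not> ?thesis"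
  have A: "(1-s)*c \<le> (1-s)*x" if "c \<le> x" for x using assms that by (simp add: mult_left_mono)
  show False
  proof (cases "c < 0")
    case True
    then have "d < 0 \<or> d > 1" using n by auto
    then show False
    proof
      assume "d < 0"
      then have "(1-s)*c \<le> 0" "s*d \<le> 0" using True assms by (simp_all add: mult_nonneg_nonpos)
      moreover have "(1-s)*c < 0 \<or> s*d < 0" using True \<open>d<0\<close> assms
        by (cases "s = 1") (auto simp: mult_pos_neg mult_neg_pos)
      ultimately show False using assms by linarith
    next
      assume "d > 1"
      then have "c \<noteq> d" "c - d < 0" using True by auto
      then have "0 \<le> c/(c-d)" "c/(c-d) \<le> 1" using True \<open>d>1\<close> by (auto simp: divide_simps)
      then show False using n \<open>c\<noteq>d\<close> by blast
    qed
  next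
    case False
    then have c1: "c > 1" using n by auto
    then have "d < 0 \<or> d > 1" using n by auto
    then show False
    proof
      assume "d > 1"
      then have "(1-s)*c \<ge> (1-s)" "s*d \<ge> s" using mult_left_mono[of 1 c "1-s"] mult_left_mono[of 1 d s] c1 assms by auto
      moreover have "(1-s)*c > (1-s) \<or> s*d > s" using c1 \<open>d>1\<close> assms
        by (cases "s = 1") auto
      ultimately show False using assms by (smt (verit))
    next
      assume "d < 0"
      then have "c \<noteq> d" "c - d > 0" using c1 by auto
      then have "0 \<le> c/(c-d)" "c/(c-d) \<le> 1" using c1 \<open>d<0\<close> by (auto simp: divide_simps)
      then show False using n \<open>c\<noteq>d\<close> by blast
    qed
  qed
qed

lemma colin:
  assumes AB: "(a1,a2) \<noteq> (b1,b2)" and o1: "ori a1 a2 b1 b2 c1 c2 = 0" and o2: "ori a1 a2 b1 b2 d1 d2 = 0"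
  and zAB: "z \<in> closed_segment (a1,a2) (b1,b2)" and zCD: "z \<in> closed_segment (c1,c2) (d1,d2)"
  shows "(c1,c2) \<in> closed_segment (a1,a2) (b1,b2) \<or> (d1,d2) \<in> closed_segment (a1,a2) (b1,b2)
    \<or> (a1,a2) \<in> closed_segment (c1,c2) (d1,d2) \<or> (b1,b2) \<in> closed_segment (c1,c2) (d1,d2)"
proof -
  have U: "(b1-a1,b2-a2) \<noteq> (0,0)" using AB by auto
  obtain c where c: "c1-a1 = c*(b1-a1)" "c2-a2 = c*(b2-a2)"
    using para[OF _ U, of "c2-a2" "c1-a1"] o1 unfolding ori_def by blast
  obtain d where d: "d1-a1 = d*(b1-a1)" "d2-a2 = d*(b2-a2)"
    using para[OF _ U, of "d2-a2" "d1-a1"] o2 unfolding ori_def by blast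
  obtain z1 z2 where zz: "z = (z1,z2)" by (cases z)
  obtain t where t: "0\<le>t" "t\<le>1" "z1 = (1-t)*a1+t*b1" "z2 = (1-t)*a2+t*b2"
    using zAB unfolding zz segc by blast
  obtain s where s: "0\<le>s" "s\<le>1" "z1 = (1-s)*c1+s*d1" "z2 = (1-s)*c2+s*d2"
    using zCD unfolding zz segc by blast
  have cc: "c1 = a1 + c*(b1-a1)" "c2 = a2 + c*(b2-a2)" "d1 = a1 + d*(b1-a1)" "d2 = a2 + d*(b2-a2)"
    using c d by (simp_all add: algebra_simps)
  have "(t - ((1-s)*c + s*d)) * (b1-a1) = 0"
  proof -
    have "(1-t)*a1+t*b1 = (1-s)*c1+s*d1" using t s by simp
    then show ?thesis unfolding cc by (simp add: algebra_simps)
  qed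
  moreover have "(t - ((1-s)*c + s*d)) * (b2-a2) = 0"
  proof -
    have "(1-t)*a2+t*b2 = (1-s)*c2+s*d2" using t s by simp
    then show ?thesis unfolding cc by (simp add: algebra_simps)
  qed
  ultimately have teq: "t = (1-s)*c + s*d" using U by auto
  from oned[OF s(1,2) t(1,2) teq] show ?thesis
  proof (elim disjE conjE)
    assume "0 \<le> c" "c \<le> 1"
    then have "(c1,c2) \<in> closed_segment (a1,a2) (b1,b2)" unfolding segc
      by (intro exI[of _ c]) (simp add: cc algebra_simps)
    then show ?thesis by blast
  next
    assume "0 \<le> d" "d \<le> 1"
    then have "(d1,d2) \<in> closed_segment (a1,a2) (b1,b2)" unfolding segc
      by (intro exI[of _ d]) (simp add: cc algebra_simps)
    then show ?thesis by blast
  next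
    assume h: "c \<noteq> d" "0 \<le> c/(c-d)" "c/(c-d) \<le> 1"
    define \<sigma> where "\<sigma> = c/(c-d)"
    have k: "(1-\<sigma>)*c + \<sigma>*d = 0" using h(1) unfolding \<sigma>_def by (simp add: field_simps)
    have "a1 = (1-\<sigma>)*c1 + \<sigma>*d1"
    proof -
      have "(1-\<sigma>)*c1 + \<sigma>*d1 = a1 + ((1-\<sigma>)*c + \<sigma>*d)*(b1-a1)" unfolding cc by (simp add: algebra_simps)
      then show ?thesis using k by simp
    qed
    moreover have "a2 = (1-\<sigma>)*c2 + \<sigma>*d2"
    proof -
      have "(1-\<sigma>)*c2 + \<sigma>*d2 = a2 + ((1-\<sigma>)*c + \<sigma>*d)*(b2-a2)" unfolding cc by (simp add: algebra_simps)
      then show ?thesis using k by simp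
    qed
    ultimately have "(a1,a2) \<in> closed_segment (c1,c2) (d1,d2)" unfolding segc using h
      by (intro exI[of _ \<sigma>]) (simp add: \<sigma>_def)
    then show ?thesis by blast
  qed
qed

definition segmeet :: "real \<Rightarrow> real \<Rightarrow> real \<Rightarrow> real \<Rightarrow> real \<Rightarrow> real \<Rightarrow> real \<Rightarrow> real \<Rightarrow> bool" where
  "segmeet a1 a2 b1 b2 c1 c2 d1 d2 =
    ((ori a1 a2 b1 b2 c1 c2 * ori a1 a2 b1 b2 d1 d2 < 0 \<and> ori c1 c2 d1 d2 a1 a2 * ori c1 c2 d1 d2 b1 b2 < 0)
     \<or> onseg c1 c2 a1 a2 b1 b2 \<or> onseg d1 d2 a1 a2 b1 b2 \<or> onseg a1 a2 c1 c2 d1 d2 \<or> onseg b1 b2 c1 c2 d1 d2)"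

lemma sgn_lem:
  fixes s x y :: real
  assumes "0<s" "s<1" "(1-s)*x + s*y = 0"
  shows "(x=0 \<and> y=0) \<or> x*y<0"
proof (cases "x = 0")
  case True then show ?thesis using assms by simp
next
  case False
  have "s*(x*y) = x*(s*y)" by simp
  also have "s*y = -((1-s)*x)" using assms(3) by linarith
  finally have e: "s*(x*y) = -((1-s)*(x*x))" by simp
  have "x*x > 0" using False by (auto simp: zero_less_mult_iff)
  then have "(1-s)*(x*x) > 0" using assms by (simp add: zero_less_mult_iff)
  then have "s*(x*y) < 0" using e by linarith
  then show ?thesis using assms(1) by (simp add: mult_less_0_iff)
qed

lemma frac01:
  fixes x y :: real
  assumes "x*y < 0"
  shows "x \<noteq> y \<and> 0 \<le> x/(x-y) \<and> x/(x-y) \<le> 1"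
proof (cases "x > 0")
  case True
  then have "y < 0" using assms by (simp add: mult_less_0_iff)
  then show ?thesis using True by (auto simp: divide_simps)
next
  case False
  then have "x < 0" "y > 0" using assms by (auto simp: mult_less_0_iff)
  then show ?thesis by (auto simp: divide_simps)
qed

lemma ori_aff: "ori a1 a2 b1 b2 ((1-s)*c1+s*d1) ((1-s)*c2+s*d2) = (1-s)* ori a1 a2 b1 b2 c1 c2 + s* ori a1 a2 b1 b2 d1 d2"
  unfolding ori_def by (simp add: algebra_simps)

lemma ori_on: "ori a1 a2 b1 b2 ((1-s)*a1+s*b1) ((1-s)*a2+s*b2) = 0"
  unfolding ori_def by (simp add: algebra_simps)

lemma meet:
  assumes AB: "(a1,a2) \<noteq> (b1,b2)" and CD: "(c1,c2) \<noteq> (d1,d2)"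
  shows "(\<exists>z. z \<in> closed_segment (a1,a2) (b1,b2) \<and> z \<in> closed_segment (c1,c2) (d1,d2))
     \<longleftrightarrow> segmeet a1 a2 b1 b2 c1 c2 d1 d2"
proof
  let ?E = "(c1,c2) \<in> closed_segment (a1,a2) (b1,b2) \<or> (d1,d2) \<in> closed_segment (a1,a2) (b1,b2)
    \<or> (a1,a2) \<in> closed_segment (c1,c2) (d1,d2) \<or> (b1,b2) \<in> closed_segment (c1,c2) (d1,d2)"
  have E: "segmeet a1 a2 b1 b2 c1 c2 d1 d2" if ?E using that unfolding segmeet_def on_iff by blast
  assume "\<exists>z. z \<in> closed_segment (a1,a2) (b1,b2) \<and> z \<in> closed_segment (c1,c2) (d1,d2)"
  then obtain z where zAB: "z \<in> closed_segment (a1,a2) (b1,b2)" and zCD: "z \<in> closed_segment (c1,c2) (d1,d2)" by blast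
  obtain z1 z2 where zz: "z = (z1,z2)" by (cases z)
  obtain t where t: "0\<le>t" "t\<le>1" "z1 = (1-t)*a1+t*b1" "z2 = (1-t)*a2+t*b2"
    using zAB unfolding zz segc by blast
  obtain s where s: "0\<le>s" "s\<le>1" "z1 = (1-s)*c1+s*d1" "z2 = (1-s)*c2+s*d2"
    using zCD unfolding zz segc by blast
  show "segmeet a1 a2 b1 b2 c1 c2 d1 d2"
  proof (cases "t = 0 \<or> t = 1 \<or> s = 0 \<or> s = 1")
    case True
    then have ?E using zAB zCD t s zz by auto
    then show ?thesis by (rule E)
  next
    case False
    then have ts: "0<t" "t<1" "0<s" "s<1" using t s by auto
    have "ori a1 a2 b1 b2 z1 z2 = 0" using t ori_on by simp
    then have "(1-s)* ori a1 a2 b1 b2 c1 c2 + s* ori a1 a2 b1 b2 d1 d2 = 0" using s ori_aff by metis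
    from sgn_lem[OF ts(3,4) this] have S1: "(ori a1 a2 b1 b2 c1 c2 = 0 \<and> ori a1 a2 b1 b2 d1 d2 = 0) \<or>
       ori a1 a2 b1 b2 c1 c2 * ori a1 a2 b1 b2 d1 d2 < 0" .
    have "ori c1 c2 d1 d2 z1 z2 = 0" using s ori_on by simp
    then have "(1-t)* ori c1 c2 d1 d2 a1 a2 + t* ori c1 c2 d1 d2 b1 b2 = 0" using t ori_aff by metis
    from sgn_lem[OF ts(1,2) this] have S2: "(ori c1 c2 d1 d2 a1 a2 = 0 \<and> ori c1 c2 d1 d2 b1 b2 = 0) \<or>
       ori c1 c2 d1 d2 a1 a2 * ori c1 c2 d1 d2 b1 b2 < 0" .
    show ?thesis
    proof (cases "ori a1 a2 b1 b2 c1 c2 = 0 \<and> ori a1 a2 b1 b2 d1 d2 = 0")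
      case True
      from colin[OF AB True[THEN conjunct1] True[THEN conjunct2] zAB zCD] show ?thesis by (rule E)
    next
      case F1: False
      show ?thesis
      proof (cases "ori c1 c2 d1 d2 a1 a2 = 0 \<and> ori c1 c2 d1 d2 b1 b2 = 0")
        case True
        from colin[OF CD True[THEN conjunct1] True[THEN conjunct2] zCD zAB] have ?E by blast
        then show ?thesis by (rule E)
      next
        case False
        then show ?thesis using S1 S2 F1 unfolding segmeet_def by blast
      qed
    qed
  qed
next
  assume h: "segmeet a1 a2 b1 b2 c1 c2 d1 d2"
  show "\<exists>z. z \<in> closed_segment (a1,a2) (b1,b2) \<and> z \<in> closed_segment (c1,c2) (d1,d2)"
  proof (cases "ori a1 a2 b1 b2 c1 c2 * ori a1 a2 b1 b2 d1 d2 < 0 \<and> ori c1 c2 d1 d2 a1 a2 * ori c1 c2 d1 d2 b1 b2 < 0")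
    case False
    then have "onseg c1 c2 a1 a2 b1 b2 \<or> onseg d1 d2 a1 a2 b1 b2 \<or> onseg a1 a2 c1 c2 d1 d2 \<or> onseg b1 b2 c1 c2 d1 d2"
      using h unfolding segmeet_def by blast
    then show ?thesis unfolding on_iff[symmetric] by (metis ends_in_segment)
  next
    case True
    define q1 where "q1 = ori a1 a2 b1 b2 c1 c2"
    define q2 where "q2 = ori a1 a2 b1 b2 d1 d2"
    define q3 where "q3 = ori c1 c2 d1 d2 a1 a2"
    define q4 where "q4 = ori c1 c2 d1 d2 b1 b2"
    have D: "q3 - q4 = q2 - q1" unfolding q1_def q2_def q3_def q4_def ori_def by (simp add: algebra_simps)
    define \<Delta> where "\<Delta> = q3 - q4"
    have T: "q3 \<noteq> q4 \<and> 0 \<le> q3/(q3-q4) \<and> q3/(q3-q4) \<le> 1" using frac01 True unfolding q3_def q4_def by blast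
    have S: "q1 \<noteq> q2 \<and> 0 \<le> q1/(q1-q2) \<and> q1/(q1-q2) \<le> 1" using frac01 True unfolding q1_def q2_def by blast
    have Dn: "\<Delta> \<noteq> 0" using T unfolding \<Delta>_def by simp
    define t where "t = q3/\<Delta>"
    define s where "s = q1/(q1-q2)"
    have t\<Delta>: "t*\<Delta> = q3" using Dn unfolding t_def by simp
    have DD: "\<Delta> = -(q1-q2)" using D unfolding \<Delta>_def by simp
    have s\<Delta>: "s*\<Delta> = -q1" using S unfolding s_def DD by (simp add: field_simps)
    have id1: "(\<Delta>-q3)*a1 + q3*b1 = (\<Delta>+q1)*c1 - q1*d1"
      unfolding \<Delta>_def q1_def q3_def q4_def ori_def by (simp add: algebra_simps)
    have id2: "(\<Delta>-q3)*a2 + q3*b2 = (\<Delta>+q1)*c2 - q1*d2"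
      unfolding \<Delta>_def q1_def q3_def q4_def ori_def by (simp add: algebra_simps)
    have e1: "(1-t)*a1+t*b1 = (1-s)*c1+s*d1"
    proof -
      have "((1-t)*a1+t*b1)*\<Delta> = (\<Delta> - t*\<Delta>)*a1 + (t*\<Delta>)*b1" by (simp add: algebra_simps)
      also have "\<dots> = (\<Delta>-q3)*a1 + q3*b1" using t\<Delta> by simp
      also have "\<dots> = (\<Delta>+q1)*c1 - q1*d1" by (rule id1)
      also have "\<dots> = (\<Delta> - s*\<Delta>)*c1 + (s*\<Delta>)*d1" using s\<Delta> by simp
      also have "\<dots> = ((1-s)*c1+s*d1)*\<Delta>" by (simp add: algebra_simps)
      finally have "((1-t)*a1+t*b1)*\<Delta> = ((1-s)*c1+s*d1)*\<Delta>" .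
      then show ?thesis using Dn by simp
    qed
    have e2: "(1-t)*a2+t*b2 = (1-s)*c2+s*d2"
    proof -
      have "((1-t)*a2+t*b2)*\<Delta> = (\<Delta> - t*\<Delta>)*a2 + (t*\<Delta>)*b2" by (simp add: algebra_simps)
      also have "\<dots> = (\<Delta>-q3)*a2 + q3*b2" using t\<Delta> by simp
      also have "\<dots> = (\<Delta>+q1)*c2 - q1*d2" by (rule id2)
      also have "\<dots> = (\<Delta> - s*\<Delta>)*c2 + (s*\<Delta>)*d2" using s\<Delta> by simp
      also have "\<dots> = ((1-s)*c2+s*d2)*\<Delta>" by (simp add: algebra_simps)
      finally have "((1-t)*a2+t*b2)*\<Delta> = ((1-s)*c2+s*d2)*\<Delta>" .
      then show ?thesis using Dn by simp
    qed
    have "((1-t)*a1+t*b1, (1-t)*a2+t*b2) \<in> closed_segment (a1,a2) (b1,b2)"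
      unfolding segc using T unfolding t_def \<Delta>_def by blast
    moreover have "((1-t)*a1+t*b1, (1-t)*a2+t*b2) \<in> closed_segment (c1,c2) (d1,d2)"
      unfolding segc e1 e2 using S unfolding s_def by blast
    ultimately show ?thesis by blast
  qed
qed

lemma shared:
  assumes AW: "(a1,a2) \<noteq> (w1,w2)" and DW: "(d1,d2) \<noteq> (w1,w2)"
  shows "(\<exists>z. z \<in> closed_segment (w1,w2) (a1,a2) \<and> z \<in> closed_segment (w1,w2) (d1,d2) \<and> z \<noteq> (w1,w2))
     \<longleftrightarrow> (ori w1 w2 a1 a2 d1 d2 = 0 \<and> (a1-w1)*(d1-w1)+(a2-w2)*(d2-w2) > 0)"
proof
  assume "\<exists>z. z \<in> closed_segment (w1,w2) (a1,a2) \<and> z \<in> closed_segment (w1,w2) (d1,d2) \<and> z \<noteq> (w1,w2)"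
  then obtain z1 z2 where zA: "(z1,z2) \<in> closed_segment (w1,w2) (a1,a2)" and zD: "(z1,z2) \<in> closed_segment (w1,w2) (d1,d2)"
    and zW: "(z1,z2) \<noteq> (w1,w2)" by auto
  obtain t where t: "0\<le>t" "t\<le>1" "z1 = (1-t)*w1+t*a1" "z2 = (1-t)*w2+t*a2"
    using zA unfolding segc by blast
  obtain s where s: "0\<le>s" "s\<le>1" "z1 = (1-s)*w1+s*d1" "z2 = (1-s)*w2+s*d2"
    using zD unfolding segc by blast
  have "t \<noteq> 0" using t zW by auto
  have "s \<noteq> 0" using s zW by auto
  have e1: "t*(a1-w1) = s*(d1-w1)" using t s by (simp add: algebra_simps)
  have e2: "t*(a2-w2) = s*(d2-w2)" using t s by (simp add: algebra_simps)
  have "s * ori w1 w2 a1 a2 d1 d2 = (a1-w1)*(s*(d2-w2)) - (a2-w2)*(s*(d1-w1))"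
    unfolding ori_def by (simp add: algebra_simps)
  also have "\<dots> = 0" unfolding e1[symmetric] e2[symmetric] by (simp add: algebra_simps)
  finally have o: "ori w1 w2 a1 a2 d1 d2 = 0" using \<open>s\<noteq>0\<close> by simp
  have "s * ((a1-w1)*(d1-w1)+(a2-w2)*(d2-w2)) = (a1-w1)*(s*(d1-w1))+(a2-w2)*(s*(d2-w2))"
    by (simp add: algebra_simps)
  also have "\<dots> = t * ((a1-w1)^2+(a2-w2)^2)" unfolding e1[symmetric] e2[symmetric]
    by (simp add: algebra_simps power2_eq_square)
  finally have ee: "s * ((a1-w1)*(d1-w1)+(a2-w2)*(d2-w2)) = t * ((a1-w1)^2+(a2-w2)^2)" .
  have "(a1-w1, a2-w2) \<noteq> (0,0)" using AW by auto
  then have "(a1-w1)^2+(a2-w2)^2 > 0" by (rule sumsq_pos)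
  then have "t * ((a1-w1)^2+(a2-w2)^2) > 0" using t \<open>t\<noteq>0\<close> by simp
  then have "s * ((a1-w1)*(d1-w1)+(a2-w2)*(d2-w2)) > 0" using ee by simp
  then have "(a1-w1)*(d1-w1)+(a2-w2)*(d2-w2) > 0" using s by (simp add: zero_less_mult_iff)
  with o show "ori w1 w2 a1 a2 d1 d2 = 0 \<and> (a1-w1)*(d1-w1)+(a2-w2)*(d2-w2) > 0" by simp
next
  assume h: "ori w1 w2 a1 a2 d1 d2 = 0 \<and> (a1-w1)*(d1-w1)+(a2-w2)*(d2-w2) > 0"
  have U: "(a1-w1, a2-w2) \<noteq> (0,0)" using AW by auto
  define N where "N = (a1-w1)^2+(a2-w2)^2"
  have N: "N > 0" unfolding N_def using U by (rule sumsq_pos)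
  define lam where "lam = ((d1-w1)*(a1-w1)+(d2-w2)*(a2-w2))/N"
  have "(a1-w1)*(d2-w2) - (a2-w2)*(d1-w1) = 0" using h unfolding ori_def by simp
  from para[OF this U] have v: "d1-w1 = lam*(a1-w1)" "d2-w2 = lam*(a2-w2)" unfolding lam_def N_def by auto
  have lp: "lam > 0" unfolding lam_def using h N by (simp add: mult.commute)
  show "\<exists>z. z \<in> closed_segment (w1,w2) (a1,a2) \<and> z \<in> closed_segment (w1,w2) (d1,d2) \<and> z \<noteq> (w1,w2)"
  proof (cases "lam \<le> 1")
    case True
    have "(d1,d2) \<in> closed_segment (w1,w2) (a1,a2)" unfolding segc
      using True lp v by (intro exI[of _ lam]) (auto simp: algebra_simps)
    then show ?thesis using DW by (intro exI[of _ "(d1,d2)"]) auto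
  next
    case False
    have a: "a1-w1 = (1/lam)*(d1-w1)" "a2-w2 = (1/lam)*(d2-w2)" using v lp by auto
    have "(a1,a2) \<in> closed_segment (w1,w2) (d1,d2)" unfolding segc
      using False lp a by (intro exI[of _ "1/lam"]) (auto simp: algebra_simps add_divide_distrib[symmetric])
    then show ?thesis using AW by (intro exI[of _ "(a1,a2)"]) auto
  qed
qed

definition pv :: "nat \<Rightarrow> mpoly" where "pv i = [(1,[i])]"
definition pc :: "int \<Rightarrow> mpoly" where "pc c = [(c,[])]"
definition padd :: "mpoly \<Rightarrow> mpoly \<Rightarrow> mpoly" where "padd p q = p @ q"
definition pneg :: "mpoly \<Rightarrow> mpoly" where "pneg p = map (\<lambda>(c,vs). (-c,vs)) p"
definition psub :: "mpoly \<Rightarrow> mpoly \<Rightarrow> mpoly" where "psub p q = padd p (pneg q)"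
definition pmul :: "mpoly \<Rightarrow> mpoly \<Rightarrow> mpoly" where
  "pmul p q = concat (map (\<lambda>(c1,v1). map (\<lambda>(c2,v2). (c1*c2, v1@v2)) q) p)"

lemma ev_nil[simp]: "mpoly_eval x [] = 0" by (simp add: mpoly_eval_def)
lemma ev_pv[simp]: "mpoly_eval x (pv i) = x i" by (simp add: mpoly_eval_def pv_def)
lemma ev_pc[simp]: "mpoly_eval x (pc c) = of_int c" by (simp add: mpoly_eval_def pc_def)
lemma ev_padd[simp]: "mpoly_eval x (padd p q) = mpoly_eval x p + mpoly_eval x q"
  by (simp add: mpoly_eval_def padd_def)
lemma ev_pneg[simp]: "mpoly_eval x (pneg p) = - mpoly_eval x p"
  by (induction p) (auto simp: mpoly_eval_def pneg_def)
lemma ev_psub[simp]: "mpoly_eval x (psub p q) = mpoly_eval x p - mpoly_eval x q"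
  by (simp add: psub_def)
lemma ev_inner: "mpoly_eval x (map (\<lambda>(c2,v2). (c1*c2, v1@v2)) q) = of_int c1 * (\<Prod>i\<leftarrow>v1. x i) * mpoly_eval x q"
  by (induction q) (auto simp: mpoly_eval_def algebra_simps)
lemma ev_pmul[simp]: "mpoly_eval x (pmul p q) = mpoly_eval x p * mpoly_eval x q"
proof (induction p)
  case Nil then show ?case by (simp add: pmul_def mpoly_eval_def)
next
  case (Cons a p)
  obtain c1 v1 where a: "a = (c1,v1)" by (cases a)
  have "pmul (a#p) q = map (\<lambda>(c2,v2). (c1*c2, v1@v2)) q @ pmul p q" by (simp add: pmul_def a)
  then have "mpoly_eval x (pmul (a#p) q) = mpoly_eval x (map (\<lambda>(c2,v2). (c1*c2, v1@v2)) q) + mpoly_eval x (pmul p q)"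
    by (simp add: mpoly_eval_def)
  also have "\<dots> = of_int c1 * (\<Prod>i\<leftarrow>v1. x i) * mpoly_eval x q + mpoly_eval x p * mpoly_eval x q"
    using Cons ev_inner by simp
  also have "\<dots> = mpoly_eval x (a#p) * mpoly_eval x q" by (simp add: mpoly_eval_def a algebra_simps)
  finally show ?case .
qed

definition dg :: "nat \<Rightarrow> mpoly \<Rightarrow> bool" where "dg k p = (\<forall>m\<in>set p. length (snd m) \<le> k)"

lemma deg_le: "dg k p \<Longrightarrow> mpoly_degree p \<le> k"
  by (auto simp: dg_def mpoly_degree_def)
lemma dg_nil[simp]: "dg k []" by (simp add: dg_def)
lemma dg_pv[simp]: "1 \<le> k \<Longrightarrow> dg k (pv i)" by (simp add: dg_def pv_def)
lemma dg_pc[simp]: "dg k (pc c)" by (simp add: dg_def pc_def)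
lemma dg_padd[simp]: "dg k p \<Longrightarrow> dg k q \<Longrightarrow> dg k (padd p q)" by (auto simp: dg_def padd_def)
lemma dg_pneg[simp]: "dg k p \<Longrightarrow> dg k (pneg p)" by (auto simp: dg_def pneg_def)
lemma dg_psub[simp]: "dg k p \<Longrightarrow> dg k q \<Longrightarrow> dg k (psub p q)" by (simp add: psub_def)
lemma dg_pmul: "dg k1 p \<Longrightarrow> dg k2 q \<Longrightarrow> dg (k1+k2) (pmul p q)"
  by (fastforce simp: dg_def pmul_def add_mono)
lemma dg_mono: "dg k p \<Longrightarrow> k \<le> k' \<Longrightarrow> dg k' p" by (auto simp: dg_def)

lemma vars_nil[simp]: "mpoly_vars [] = {}" by (simp add: mpoly_vars_def)
lemma vars_pv[simp]: "mpoly_vars (pv i) = {i}" by (simp add: mpoly_vars_def pv_def)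
lemma vars_pc[simp]: "mpoly_vars (pc c) = {}" by (simp add: mpoly_vars_def pc_def)
lemma vars_padd[simp]: "mpoly_vars (padd p q) = mpoly_vars p \<union> mpoly_vars q" by (simp add: mpoly_vars_def padd_def)
lemma vars_pneg[simp]: "mpoly_vars (pneg p) = mpoly_vars p" by (auto simp: mpoly_vars_def pneg_def)
lemma vars_psub[simp]: "mpoly_vars (psub p q) = mpoly_vars p \<union> mpoly_vars q" by (simp add: psub_def)
lemma vars_pmul: "mpoly_vars (pmul p q) \<subseteq> mpoly_vars p \<union> mpoly_vars q"
  by (auto simp: mpoly_vars_def pmul_def; force)

fun fconj :: "etr_fm list \<Rightarrow> etr_fm" where
  "fconj [] = Atom [] REq []"
| "fconj (a#as) = FAnd a (fconj as)"
fun fdisj :: "etr_fm list \<Rightarrow> etr_fm" where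
  "fdisj [] = Atom [] RLt []"
| "fdisj (a#as) = FOr a (fdisj as)"

lemma fconj_holds[simp]: "fm_holds x (fconj xs) \<longleftrightarrow> (\<forall>a\<in>set xs. fm_holds x a)"
  by (induction xs) auto
lemma fdisj_holds[simp]: "fm_holds x (fdisj xs) \<longleftrightarrow> (\<exists>a\<in>set xs. fm_holds x a)"
  by (induction xs) auto
lemma fconj_vars: "(\<forall>a\<in>set xs. fm_vars a \<subseteq> V) \<Longrightarrow> fm_vars (fconj xs) \<subseteq> V"
  by (induction xs) auto
lemma fdisj_vars: "(\<forall>a\<in>set xs. fm_vars a \<subseteq> V) \<Longrightarrow> fm_vars (fdisj xs) \<subseteq> V"
  by (induction xs) auto
lemma fconj_deg: "(\<forall>a\<in>set xs. fm_degree a \<le> k) \<Longrightarrow> fm_degree (fconj xs) \<le> k"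
  by (induction xs) (auto simp: mpoly_degree_def)
lemma fdisj_deg: "(\<forall>a\<in>set xs. fm_degree a \<le> k) \<Longrightarrow> fm_degree (fdisj xs) \<le> k"
  by (induction xs) (auto simp: mpoly_degree_def)
lemma fconj_atoms: "(\<forall>a\<in>set xs. fm_atoms a \<le> B) \<Longrightarrow> fm_atoms (fconj xs) \<le> 1 + length xs * B"
  by (induction xs) auto
lemma fdisj_atoms: "(\<forall>a\<in>set xs. fm_atoms a \<le> B) \<Longrightarrow> fm_atoms (fdisj xs) \<le> 1 + length xs * B"
  by (induction xs) auto

definition grid :: "nat \<Rightarrow> nat \<Rightarrow> (nat \<Rightarrow> nat \<Rightarrow> 'a) \<Rightarrow> 'a list" where
  "grid a b g = concat (map (\<lambda>i. map (g i) [0..<b]) [0..<a])"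
lemma grid_set[simp]: "set (grid a b g) = {g i j | i j. i < a \<and> j < b}"
  by (auto simp: grid_def) blast
lemma grid_len[simp]: "length (grid a b g) = a * b"
  by (simp add: grid_def length_concat comp_def sum_list_triv)

definition PX :: "nat \<Rightarrow> mpoly" where "PX i = pv (2*i)"
definition PY :: "nat \<Rightarrow> mpoly" where "PY i = pv (2*i+1)"

definition pori :: "nat \<Rightarrow> nat \<Rightarrow> nat \<Rightarrow> mpoly" where
  "pori a b c = psub (pmul (psub (PX b) (PX a)) (psub (PY c) (PY a))) (pmul (psub (PY b) (PY a)) (psub (PX c) (PX a)))"
definition pdot :: "nat \<Rightarrow> nat \<Rightarrow> nat \<Rightarrow> nat \<Rightarrow> mpoly" where
  "pdot a b c d = padd (pmul (psub (PX a) (PX b)) (psub (PX c) (PX d))) (pmul (psub (PY a) (PY b)) (psub (PY c) (PY d)))"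

definition fonseg :: "nat \<Rightarrow> nat \<Rightarrow> nat \<Rightarrow> etr_fm" where
  "fonseg q a b = FAnd (Atom (pori a b q) REq []) (Atom (pdot q a q b) RLe [])"
definition fmeet :: "nat \<Rightarrow> nat \<Rightarrow> nat \<Rightarrow> nat \<Rightarrow> etr_fm" where
  "fmeet a b c d = FOr (FAnd (Atom (pmul (pori a b c) (pori a b d)) RLt []) (Atom (pmul (pori c d a) (pori c d b)) RLt []))
     (FOr (fonseg c a b) (FOr (fonseg d a b) (FOr (fonseg a c d) (fonseg b c d))))"
definition fshared :: "nat \<Rightarrow> nat \<Rightarrow> nat \<Rightarrow> etr_fm" where
  "fshared w a d = FAnd (Atom (pori w a d) REq []) (Atom (pdot a w d w) RGt [])"

definition crossF :: "nat set \<Rightarrow> nat set \<Rightarrow> etr_fm" where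
  "crossF e f = (if e \<inter> f = {} then fmeet (Min e) (Max e) (Min f) (Max f)
     else fshared (the_elem (e \<inter> f)) (the_elem (e - f)) (the_elem (f - e)))"

lemma ev_pori[simp]: "mpoly_eval x (pori a b c) = ori (x(2*a)) (x(2*a+1)) (x(2*b)) (x(2*b+1)) (x(2*c)) (x(2*c+1))"
  by (simp add: pori_def ori_def PX_def PY_def)
lemma ev_pdot[simp]: "mpoly_eval x (pdot a b c d) = (x(2*a) - x(2*b))*(x(2*c) - x(2*d)) + (x(2*a+1) - x(2*b+1))*(x(2*c+1) - x(2*d+1))"
  by (simp add: pdot_def PX_def PY_def)

lemma fmeet_holds: "fm_holds x (fmeet a b c d) \<longleftrightarrow>
  segmeet (x(2*a)) (x(2*a+1)) (x(2*b)) (x(2*b+1)) (x(2*c)) (x(2*c+1)) (x(2*d)) (x(2*d+1))"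
  by (simp add: fmeet_def fonseg_def segmeet_def onseg_def)
lemma fshared_holds: "fm_holds x (fshared w a d) \<longleftrightarrow>
  (ori (x(2*w)) (x(2*w+1)) (x(2*a)) (x(2*a+1)) (x(2*d)) (x(2*d+1)) = 0 \<and>
   (x(2*a) - x(2*w))*(x(2*d) - x(2*w)) + (x(2*a+1) - x(2*w+1))*(x(2*d+1) - x(2*w+1)) > 0)"
  by (simp add: fshared_def)

lemma dg_PX[simp]: "dg 1 (PX i)" "dg 1 (PY i)" by (simp_all add: PX_def PY_def)
lemma dg_pmul11: "dg 1 p \<Longrightarrow> dg 1 q \<Longrightarrow> dg 2 (pmul p q)"
  using dg_pmul[of 1 p 1 q] by (simp add: numeral_2_eq_2)
lemma dg_pori: "dg 2 (pori a b c)"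
  unfolding pori_def by (intro dg_psub dg_pmul11 dg_PX)
lemma dg_pdot: "dg 2 (pdot a b c d)"
  unfolding pdot_def by (intro dg_padd dg_psub dg_pmul11 dg_PX)
lemma dg_pori2: "dg 4 (pmul (pori a b c) (pori a' b' c'))"
  using dg_pmul[OF dg_pori dg_pori] by (simp add: numeral_Bit0)

lemma vars_PX[simp]: "mpoly_vars (PX i) = {2*i}" "mpoly_vars (PY i) = {2*i+1}" by (simp_all add: PX_def PY_def)
lemma sub_mul: "mpoly_vars p \<subseteq> V \<Longrightarrow> mpoly_vars q \<subseteq> V \<Longrightarrow> mpoly_vars (pmul p q) \<subseteq> V"
  using vars_pmul by blast
lemma vars_pori: "a < n \<Longrightarrow> b < n \<Longrightarrow> c < n \<Longrightarrow> mpoly_vars (pori a b c) \<subseteq> {..<2*n}"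
  unfolding pori_def vars_psub Un_subset_iff by (intro conjI sub_mul) auto
lemma vars_pdot: "a < n \<Longrightarrow> b < n \<Longrightarrow> c < n \<Longrightarrow> d < n \<Longrightarrow> mpoly_vars (pdot a b c d) \<subseteq> {..<2*n}"
  unfolding pdot_def vars_padd Un_subset_iff by (intro conjI sub_mul) auto

lemma deg_nil[simp]: "mpoly_degree [] = 0" by (simp add: mpoly_degree_def)
lemma dg4: "dg 4 (pori a b c)" "dg 4 (pdot a b c d)"
  using dg_mono[OF dg_pori, of 4] dg_mono[OF dg_pdot, of 4] by auto

lemma fmeet_props: "a < n \<Longrightarrow> b < n \<Longrightarrow> c < n \<Longrightarrow> d < n \<Longrightarrow>
  fm_vars (fmeet a b c d) \<subseteq> {..<2*n} \<and> fm_degree (fmeet a b c d) \<le> 4 \<and> fm_atoms (fmeet a b c d) \<le> 10"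
  unfolding fmeet_def fonseg_def
  by (simp add: vars_pori vars_pdot sub_mul deg_le dg4 dg_pori2)

lemma fshared_props: "a < n \<Longrightarrow> w < n \<Longrightarrow> d < n \<Longrightarrow>
  fm_vars (fshared w a d) \<subseteq> {..<2*n} \<and> fm_degree (fshared w a d) \<le> 4 \<and> fm_atoms (fshared w a d) \<le> 10"
  unfolding fshared_def
  by (simp add: vars_pori vars_pdot sub_mul deg_le dg4 dg_pori2)

lemma edge_obtain:
  assumes "simple_graph n E" "e \<in> E"
  obtains a b where "e = {a,b}" "a < b" "b < n" "Min e = a" "Max e = b"
proof -
  obtain u v where uv: "e = {u,v}" "u \<noteq> v" "u < n" "v < n" using assms unfolding simple_graph_def by blast
  show ?thesis
  proof (cases "u < v")
    case True then show ?thesis using that[of u v] uv by auto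
  next
    case False then have "v < u" using uv by auto
    then show ?thesis using that[of v u] uv by (auto simp: insert_commute)
  qed
qed

lemma shared_obtain:
  assumes "simple_graph n E" "e \<in> E" "f \<in> E" "e \<noteq> f" "e \<inter> f \<noteq> {}"
  obtains w a d where "e = {w,a}" "f = {w,d}" "w \<noteq> a" "w \<noteq> d" "a \<noteq> d" "w < n" "a < n" "d < n"
proof -
  obtain u v where uv: "e = {u,v}" "u \<noteq> v" "u < n" "v < n" using assms unfolding simple_graph_def by blast
  obtain c d where cd: "f = {c,d}" "c \<noteq> d" "c < n" "d < n" using assms unfolding simple_graph_def by blast
  show ?thesis
  proof (cases "u = c")
    case True then show ?thesis using that[of u v d] uv cd assms(4) by auto
  next
    case F1: False
    show ?thesis
    proof (cases "u = d")
      case True then show ?thesis using that[of u v c] uv cd assms(4) by (auto simp: insert_commute)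
    next
      case F2: False
      show ?thesis
      proof (cases "v = c")
        case True then show ?thesis using that[of v u d] uv cd assms(4) F1 F2 by (auto simp: insert_commute)
      next
        case False
        then have "v = d" using uv cd assms(5) F1 F2 by auto
        then show ?thesis using that[of v u c] uv cd assms(4) F1 F2 by (auto simp: insert_commute)
      qed
    qed
  qed
qed

lemma seg_eq: "edge_seg p {a,b} = closed_segment (p a) (p b)"
  unfolding edge_seg_def by (simp add: segment_convex_hull)

lemma crossF_iff:
  assumes G: "simple_graph n E" and eE: "e \<in> E" and fE: "f \<in> E" and ef: "e \<noteq> f"
    and inj: "inj_on p {..<n}" and co: "\<forall>i<n. p i = (x(2*i), x(2*i+1))"
  shows "fm_holds x (crossF e f) \<longleftrightarrow> crosses p e f"
proof (cases "e \<inter> f = {}")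
  case True
  obtain a b where ab: "e = {a,b}" "a < b" "b < n" "Min e = a" "Max e = b" using edge_obtain[OF G eE] by blast
  obtain c d where cd: "f = {c,d}" "c < d" "d < n" "Min f = c" "Max f = d" using edge_obtain[OF G fE] by blast
  have pab: "p a \<noteq> p b" using inj ab unfolding inj_on_def by (metis lessThan_iff order.strict_trans less_irrefl)
  have pcd: "p c \<noteq> p d" using inj cd unfolding inj_on_def by (metis lessThan_iff order.strict_trans less_irrefl)
  have es: "edge_seg p e = closed_segment (p a) (p b)" "edge_seg p f = closed_segment (p c) (p d)"
    using seg_eq ab(1) cd(1) by simp_all
  have "crosses p e f \<longleftrightarrow> (\<exists>z. z \<in> closed_segment (p a) (p b) \<and> z \<in> closed_segment (p c) (p d))"
    unfolding crosses_def es True image_empty using ef by blast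
  also have "\<dots> \<longleftrightarrow> segmeet (x(2*a)) (x(2*a+1)) (x(2*b)) (x(2*b+1)) (x(2*c)) (x(2*c+1)) (x(2*d)) (x(2*d+1))"
  proof -
    have pp: "p a = (x(2*a), x(2*a+1))" "p b = (x(2*b), x(2*b+1))" "p c = (x(2*c), x(2*c+1))" "p d = (x(2*d), x(2*d+1))"
      using co ab cd by auto
    show ?thesis using pab pcd unfolding pp by (rule meet)
  qed
  also have "\<dots> \<longleftrightarrow> fm_holds x (crossF e f)" unfolding crossF_def using True ab cd by (simp add: fmeet_holds)
  finally show ?thesis by simp
next
  case False
  obtain w a d where wad: "e = {w,a}" "f = {w,d}" "w \<noteq> a" "w \<noteq> d" "a \<noteq> d" "w < n" "a < n" "d < n"
    using shared_obtain[OF G eE fE ef False] by blast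
  have i1: "e \<inter> f = {w}" "e - f = {a}" "f - e = {d}" using wad by auto
  have paw: "p a \<noteq> p w" "p d \<noteq> p w" using inj wad unfolding inj_on_def by auto
  have "crosses p e f \<longleftrightarrow> (\<exists>z. z \<in> closed_segment (p w) (p a) \<and> z \<in> closed_segment (p w) (p d) \<and> z \<noteq> p w)"
    unfolding crosses_def i1(1) using ef seg_eq[of p w a] seg_eq[of p w d] wad(1,2) by auto
  also have "\<dots> \<longleftrightarrow> (ori (x(2*w)) (x(2*w+1)) (x(2*a)) (x(2*a+1)) (x(2*d)) (x(2*d+1)) = 0 \<and>
   (x(2*a) - x(2*w))*(x(2*d) - x(2*w)) + (x(2*a+1) - x(2*w+1))*(x(2*d+1) - x(2*w+1)) > 0)"
  proof -
    have pp: "p a = (x(2*a), x(2*a+1))" "p w = (x(2*w), x(2*w+1))" "p d = (x(2*d), x(2*d+1))"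
      using co wad by auto
    show ?thesis using paw unfolding pp by (rule shared)
  qed
  also have "\<dots> \<longleftrightarrow> fm_holds x (crossF e f)" unfolding crossF_def using False i1 by (simp add: fshared_holds)
  finally show ?thesis by simp
qed

lemma crossF_props:
  assumes G: "simple_graph n E" and eE: "e \<in> E" and fE: "f \<in> E" and ef: "e \<noteq> f"
  shows "fm_vars (crossF e f) \<subseteq> {..<2*n} \<and> fm_degree (crossF e f) \<le> 4 \<and> fm_atoms (crossF e f) \<le> 10"
proof (cases "e \<inter> f = {}")
  case True
  obtain a b where ab: "e = {a,b}" "a < b" "b < n" "Min e = a" "Max e = b" using edge_obtain[OF G eE] by blast
  obtain c d where cd: "f = {c,d}" "c < d" "d < n" "Min f = c" "Max f = d" using edge_obtain[OF G fE] by blast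
  show ?thesis unfolding crossF_def using True ab cd fmeet_props[of a n b c d] by simp
next
  case False
  obtain w a d where wad: "e = {w,a}" "f = {w,d}" "w \<noteq> a" "w \<noteq> d" "a \<noteq> d" "w < n" "a < n" "d < n"
    using shared_obtain[OF G eE fE ef False] by blast
  have i1: "e \<inter> f = {w}" "e - f = {a}" "f - e = {d}" using wad by auto
  show ?thesis unfolding crossF_def using False i1 wad fshared_props[of a n w d] by simp
qed

lemma grid_ball: "(\<forall>a\<in>set (grid n m g). P a) \<longleftrightarrow> (\<forall>i<n. \<forall>j<m. P (g i j))"
  by auto

lemma nn4: "(n::nat) * n \<le> n^4"
proof (cases "n = 0")
  case True then show ?thesis by simp
next
  case False
  then have "1 \<le> n*n" by simp
  then have "n*n*1 \<le> n*n*(n*n)" by (rule mult_le_mono2)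
  then show ?thesis by (simp add: power4_eq_xxxx mult.assoc)
qed

lemma arith_fin: "F \<le> 20*(N+1)" if "(F::nat) \<le> 3 + 2*A + m + 12*B" "B \<le> N" "A \<le> N" "m \<le> A"
proof -
  have "2*A \<le> 2*N" "12*B \<le> 12*N" "m \<le> N" using that by auto
  then have "F \<le> 15*N + 3" using that(1) by linarith
  then show ?thesis by simp
qed

theorem mainTheorem8:
  "\<exists>C::nat. \<forall>(n::nat) (E::nat set set) (l::nat). simple_graph n E \<longrightarrow>
     (\<exists>\<phi>. fm_vars \<phi> \<subseteq> {..<2 * n + card E}
         \<and> fm_degree \<phi> \<le> 6
         \<and> fm_atoms \<phi> \<le> C * (n ^ 4 + 1)
         \<and> (etr_true \<phi> \<longleftrightarrow> geometric_thickness_yes n E l)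
         \<and> (\<forall>x. fm_holds x \<phi> \<longrightarrow>
               (\<exists>col. geometric_layer_drawing n E l (\<lambda>i. (x (2 * i), x (2 * i + 1))) col))
         \<and> (\<forall>p col. geometric_layer_drawing n E l p col \<longrightarrow>
               (\<exists>x. fm_holds x \<phi> \<and> (\<forall>i<n. p i = (x (2 * i), x (2 * i + 1))))))"
proof (intro exI[of _ 20] allI impI)
  fix n :: nat and E :: "nat set set" and l :: nat
  assume G: "simple_graph n E"
  have Esub: "E \<subseteq> (\<lambda>(u,v). {u,v}) ` ({..<n} \<times> {..<n})"
    using G unfolding simple_graph_def by fastforce
  have finE: "finite E" using Esub finite_subset by blast
  define m where "m = card E"
  have mle: "m \<le> n*n"
  proof -
    have "m \<le> card ((\<lambda>(u,v). {u,v}) ` ({..<n} \<times> {..<n}))" unfolding m_def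
      using Esub by (intro card_mono) auto
    also have "\<dots> \<le> card ({..<n} \<times> {..<n})" by (rule card_image_le) simp
    finally show ?thesis by (simp add: card_cartesian_product)
  qed
  obtain ed where ed: "bij_betw ed {0..<m} E" using ex_bij_betw_nat_finite[OF finE] unfolding m_def by blast
  have edE: "ed k \<in> E" if "k < m" for k using ed that unfolding bij_betw_def by auto
  have edinj: "ed k \<noteq> ed k'" if "k < m" "k' < m" "k \<noteq> k'" for k k'
    using ed that unfolding bij_betw_def inj_on_def by auto
  define L where "L = min l m"
  define TT where "TT = Atom [] REq []"
  define INJ where "INJ = fconj (grid n n (\<lambda>i j. if i = j then TT else FNot (FAnd (Atom (PX i) REq (PX j)) (Atom (PY i) REq (PY j)))))"
  define COL where "COL = fconj (map (\<lambda>k. fdisj (map (\<lambda>c. Atom (pv (2*n+k)) REq (pc (int c))) [1..<L+1])) [0..<m])"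
  define PAIRS where "PAIRS = fconj (grid m m (\<lambda>k k'. if k = k' then TT else
      FOr (FNot (Atom (pv (2*n+k)) REq (pv (2*n+k')))) (FNot (crossF (ed k) (ed k')))))"
  define \<phi> where "\<phi> = FAnd INJ (FAnd COL PAIRS)"

  have key: "fm_holds x \<phi> \<longleftrightarrow> inj_on p {..<n} \<and> (\<forall>k<m. \<exists>c\<in>{1..L}. x(2*n+k) = real c)
     \<and> (\<forall>k<m. \<forall>k'<m. k \<noteq> k' \<longrightarrow> x(2*n+k) = x(2*n+k') \<longrightarrow> \<not> crosses p (ed k) (ed k'))"
    if co: "\<forall>i<n. p i = (x(2*i), x(2*i+1))" for x p
  proof -
    have hI: "fm_holds x INJ \<longleftrightarrow> inj_on p {..<n}"
    proof -
      have "fm_holds x INJ \<longleftrightarrow> (\<forall>i<n. \<forall>j<n. i \<noteq> j \<longrightarrow> \<not> (x(2*i) = x(2*j) \<and> x(2*i+1) = x(2*j+1)))"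
        unfolding INJ_def fconj_holds grid_ball by (simp add: TT_def PX_def PY_def) blast
      also have "\<dots> \<longleftrightarrow> inj_on p {..<n}" unfolding inj_on_def using co by auto
      finally show ?thesis .
    qed
    have hC: "fm_holds x COL \<longleftrightarrow> (\<forall>k<m. \<exists>c\<in>{1..L}. x(2*n+k) = real c)"
      unfolding COL_def by (auto simp del: upt_Suc simp add: atLeastLessThanSuc_atLeastAtMost)
    have hP: "fm_holds x PAIRS \<longleftrightarrow> (\<forall>k<m. \<forall>k'<m. k \<noteq> k' \<longrightarrow> x(2*n+k) = x(2*n+k') \<longrightarrow> \<not> crosses p (ed k) (ed k'))"
      if inj: "inj_on p {..<n}"
    proof -
      have "fm_holds x PAIRS \<longleftrightarrow> (\<forall>k<m. \<forall>k'<m. k \<noteq> k' \<longrightarrow> x(2*n+k) = x(2*n+k') \<longrightarrow> \<not> fm_holds x (crossF (ed k) (ed k')))"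
        unfolding PAIRS_def fconj_holds grid_ball by (auto simp: TT_def)
      also have "\<dots> \<longleftrightarrow> (\<forall>k<m. \<forall>k'<m. k \<noteq> k' \<longrightarrow> x(2*n+k) = x(2*n+k') \<longrightarrow> \<not> crosses p (ed k) (ed k'))"
        using crossF_iff[OF G edE edE edinj inj co] by metis
      finally show ?thesis .
    qed
    show ?thesis unfolding \<phi>_def using hI hC hP by auto
  qed

  have fwd: "\<exists>col. geometric_layer_drawing n E l (\<lambda>i. (x (2 * i), x (2 * i + 1))) col"
    if h: "fm_holds x \<phi>" for x
  proof -
    define p where "p = (\<lambda>i. (x (2 * i), x (2 * i + 1)))"
    have co: "\<forall>i<n. p i = (x(2*i), x(2*i+1))" unfolding p_def by simp
    note K = key[OF co, THEN iffD1, OF h]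
    define idx where "idx = inv_into {0..<m} ed"
    have idx: "idx e < m" "ed (idx e) = e" if "e \<in> E" for e
      using ed that unfolding idx_def
      by (auto simp: bij_betw_inv_into_right bij_betw_def inv_into_into)
    define col where "col e = nat \<lfloor>x(2*n + idx e)\<rfloor>" for e
    have colv: "\<exists>c\<in>{1..L}. x(2*n + idx e) = real c \<and> col e = c" if eE: "e \<in> E" for e
    proof -
      obtain c where "c\<in>{1..L}" "x(2*n + idx e) = real c" using K idx[OF eE] by blast
      then show ?thesis unfolding col_def by auto
    qed
    have "geometric_layer_drawing n E l p col"
      unfolding geometric_layer_drawing_def straight_line_drawing_def
    proof (intro conjI ballI impI)
      show "inj_on p {..<n}" using K by blast
    next
      fix e assume "e \<in> E"
      then show "col e \<in> {1..l}" using colv[of e] unfolding L_def by auto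
    next
      fix e f assume eE: "e \<in> E" and fE: "f \<in> E" and cc: "col e = col f"
      show "\<not> crosses p e f"
      proof (cases "e = f")
        case True then show ?thesis by (simp add: crosses_def)
      next
        case False
        have "idx e \<noteq> idx f" using idx eE fE False by metis
        moreover have "x(2*n + idx e) = x(2*n + idx f)" using colv[OF eE] colv[OF fE] cc by auto
        ultimately have "\<not> crosses p (ed (idx e)) (ed (idx f))" using K idx eE fE by blast
        then show ?thesis using idx eE fE by simp
      qed
    qed
    then show ?thesis unfolding p_def by blast
  qed

  have bwd: "\<exists>x. fm_holds x \<phi> \<and> (\<forall>i<n. p i = (x (2 * i), x (2 * i + 1)))"
    if h: "geometric_layer_drawing n E l p col" for p col
  proof -
    define x where "x j = (if j < 2*n then (if even j then fst (p (j div 2)) else snd (p (j div 2)))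
       else (if m \<le> l then real (j - 2*n + 1) else real (col (ed (j - 2*n)))))" for j
    have co: "\<forall>i<n. p i = (x(2*i), x(2*i+1))" unfolding x_def by auto
    have xc: "x(2*n+k) = (if m \<le> l then real (k + 1) else real (col (ed k)))" for k
      unfolding x_def by simp
    have inj: "inj_on p {..<n}" using h unfolding geometric_layer_drawing_def straight_line_drawing_def by blast
    have cols: "\<forall>k<m. \<exists>c\<in>{1..L}. x(2*n+k) = real c"
    proof (intro allI impI)
      fix k assume k: "k < m"
      show "\<exists>c\<in>{1..L}. x(2*n+k) = real c"
      proof (cases "m \<le> l")
        case True then show ?thesis unfolding xc L_def using k by (intro bexI[of _ "k+1"]) auto
      next
        case False
        have "col (ed k) \<in> {1..l}" using h edE[OF k] unfolding geometric_layer_drawing_def by blast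
        then show ?thesis unfolding xc L_def using False by (intro bexI[of _ "col (ed k)"]) auto
      qed
    qed
    have prs: "\<forall>k<m. \<forall>k'<m. k \<noteq> k' \<longrightarrow> x(2*n+k) = x(2*n+k') \<longrightarrow> \<not> crosses p (ed k) (ed k')"
    proof (intro allI impI)
      fix k k' assume k: "k < m" and k': "k' < m" and kk: "k \<noteq> k'" and xe: "x(2*n+k) = x(2*n+k')"
      show "\<not> crosses p (ed k) (ed k')"
      proof (cases "m \<le> l")
        case True then show ?thesis using xe kk unfolding xc by simp
      next
        case False
        then have "col (ed k) = col (ed k')" using xe unfolding xc by simp
        then show ?thesis using h edE[OF k] edE[OF k'] unfolding geometric_layer_drawing_def by blast
      qed
    qed
    show ?thesis using key[OF co] inj cols prs co by blast
  qed

  have vars: "fm_vars \<phi> \<subseteq> {..<2 * n + card E}"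
  proof -
    have "fm_vars INJ \<subseteq> {..<2*n+m}" unfolding INJ_def
      by (rule fconj_vars) (auto simp: TT_def PX_def PY_def)
    moreover have "fm_vars COL \<subseteq> {..<2*n+m}" unfolding COL_def
      by (rule fconj_vars) (auto intro!: fdisj_vars)
    moreover have "fm_vars PAIRS \<subseteq> {..<2*n+m}" unfolding PAIRS_def
    proof (rule fconj_vars, unfold grid_ball, intro allI impI)
      fix k k' assume k: "k < m" and k': "k' < m"
      show "fm_vars (if k = k' then TT else FOr (FNot (Atom (pv (2*n+k)) REq (pv (2*n+k')))) (FNot (crossF (ed k) (ed k'))))
          \<subseteq> {..<2*n+m}"
        using crossF_props[OF G edE[OF k] edE[OF k'] edinj[OF k k']] k k' by (auto simp: TT_def) (meson in_mono lessThan_iff trans_less_add1)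
    qed
    ultimately show ?thesis unfolding \<phi>_def m_def by auto
  qed

  have deg: "fm_degree \<phi> \<le> 6"
  proof -
    have "fm_degree INJ \<le> 6" unfolding INJ_def
      by (rule fconj_deg) (auto simp: TT_def PX_def PY_def intro!: deg_le)
    moreover have "fm_degree COL \<le> 6" unfolding COL_def
      by (rule fconj_deg) (auto intro!: fdisj_deg deg_le)
    moreover have "fm_degree PAIRS \<le> 6" unfolding PAIRS_def
    proof (rule fconj_deg, unfold grid_ball, intro allI impI)
      fix k k' assume k: "k < m" and k': "k' < m"
      show "fm_degree (if k = k' then TT else FOr (FNot (Atom (pv (2*n+k)) REq (pv (2*n+k')))) (FNot (crossF (ed k) (ed k'))))
          \<le> 6"
        using crossF_props[OF G edE[OF k] edE[OF k'] edinj[OF k k']] k k'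
        by (auto simp: TT_def intro!: deg_le)
    qed
    ultimately show ?thesis unfolding \<phi>_def by auto
  qed

  have atoms: "fm_atoms \<phi> \<le> 20 * (n ^ 4 + 1)"
  proof -
    have a1: "fm_atoms INJ \<le> 1 + n*n*2" unfolding INJ_def
      by (rule order.trans[OF fconj_atoms[where B=2]]) (auto simp: TT_def)
    have a2: "fm_atoms COL \<le> 1 + m*(1+m)"
    proof -
      have ak: "fm_atoms (fdisj (map (\<lambda>c. Atom (pv (2*n+k)) REq (pc (int c))) [1..<L+1])) \<le> 1 + m" for k
      proof -
        have "fm_atoms (fdisj (map (\<lambda>c. Atom (pv (2*n+k)) REq (pc (int c))) [1..<L+1]))
           \<le> 1 + length (map (\<lambda>c. Atom (pv (2*n+k)) REq (pc (int c))) [1..<L+1]) * 1"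
          by (rule fdisj_atoms) auto
        moreover have "length (map (\<lambda>c. Atom (pv (2*n+k)) REq (pc (int c))) [1..<L+1]) = L" by simp
        moreover have "L \<le> m" unfolding L_def by simp
        ultimately show ?thesis by linarith
      qed
      show ?thesis unfolding COL_def
        by (rule order.trans[OF fconj_atoms[where B="1+m"]]) (use ak in \<open>auto simp del: upt_Suc\<close>)
    qed
    have a3: "fm_atoms PAIRS \<le> 1 + m*m*11"
    proof -
      have "\<forall>a\<in>set (grid m m (\<lambda>k k'. if k = k' then TT else
          FOr (FNot (Atom (pv (2*n+k)) REq (pv (2*n+k')))) (FNot (crossF (ed k) (ed k'))))). fm_atoms a \<le> 11"
        unfolding grid_ball
      proof (intro allI impI)
        fix k k' assume k: "k < m" and k': "k' < m"
        show "fm_atoms (if k = k' then TT else FOr (FNot (Atom (pv (2*n+k)) REq (pv (2*n+k')))) (FNot (crossF (ed k) (ed k'))))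
          \<le> 11"
          using crossF_props[OF G edE[OF k] edE[OF k'] edinj[OF k k']] k k' by (auto simp: TT_def)
      qed
      from fconj_atoms[OF this] show ?thesis unfolding PAIRS_def by simp
    qed
    have "fm_atoms \<phi> \<le> 3 + 2*(n*n) + m + 12*(m*m)" unfolding \<phi>_def using a1 a2 a3 by (simp add: algebra_simps)
    moreover have "m*m \<le> n^4" using mult_le_mono[OF mle mle] nn4[of n] by (simp add: power4_eq_xxxx mult.assoc)
    moreover have "n*n \<le> n^4" by (rule nn4)
    ultimately show ?thesis using mle arith_fin by blast
  qed

  show "\<exists>\<phi>. fm_vars \<phi> \<subseteq> {..<2 * n + card E}
         \<and> fm_degree \<phi> \<le> 6
         \<and> fm_atoms \<phi> \<le> 20 * (n ^ 4 + 1)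
         \<and> (etr_true \<phi> \<longleftrightarrow> geometric_thickness_yes n E l)
         \<and> (\<forall>x. fm_holds x \<phi> \<longrightarrow>
               (\<exists>col. geometric_layer_drawing n E l (\<lambda>i. (x (2 * i), x (2 * i + 1))) col))
         \<and> (\<forall>p col. geometric_layer_drawing n E l p col \<longrightarrow>
               (\<exists>x. fm_holds x \<phi> \<and> (\<forall>i<n. p i = (x (2 * i), x (2 * i + 1)))))"
  proof (intro exI[of _ \<phi>] conjI allI impI)
    show "etr_true \<phi> \<longleftrightarrow> geometric_thickness_yes n E l"
      unfolding etr_true_def geometric_thickness_yes_def using fwd bwd by blast
  qed (use vars deg atoms fwd bwd in auto)
qed

end
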